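(* Let $c\in(0,1)$ and let $(G,\phi)$ be a (random) locally finite connected rooted undirected graph with degrees $(d_j)_{j\in V}$, and let $R_\phi$ be its root-PageRank with damping factor $c$. For $\alpha>0$ let $d_\phi^{(\ge\alpha)}=\#\{j\in V: j\sim\phi,\ d_j\ge\alpha\}$. Assume there exist $\alpha>0$ and $\varepsilon\in(0,1)$ such that, as $k\to\infty$, $$\mathbb{P}\big(d_\phi>k,\ d_\phi^{(\ge\alpha)}\ge(1-\varepsilon)d_\phi\big)=o\big(\mathbb{P}(d_\phi>k)\big).$$ Then $$\mathbb{P}(R_\phi>k)\ge(1+o(1))\,\mathbb{P}\Big(d_\phi>\frac{\alpha k}{\varepsilon c(1-c)}\Big)\qquad\text{as }k\to\infty.$$
   Context: A rooted graph is a pair $(G,\phi)$ with $G=(V,E)$ a graph and $\phi\in V$; it is locally finite if every vertex has finite degree; random rooted graphs are random elements of the space of locally finite connected rooted graphs up to root-preserving isomorphism. With $\boldsymbol{A}=(a_{ij})$ the adjacency matrix and $\boldsymbol{P}=(p_{ij})$, $p_{ij}=a_{ij}/d_i$ (a possibly infinite matrix), the root-PageRank is $R_\phi=(1-c)\sum_{s=0}^\infty c^s\sum_{j\in V}(\boldsymbol{P}^s)_{j\phi}$. $j\sim\phi$ means $j$ and $\phi$ are adjacent. $f=o(g)$ as $k\to\infty$ means $\limsup_{k\to\infty}|f(k)/g(k)|=0$. *)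

theory Defs
  imports "HOL-Probability.Probability" "HOL-Library.Landau_Symbols"
begin

definition lf_conn_rooted_graph :: "'v set \<Rightarrow> ('v \<Rightarrow> 'v \<Rightarrow> bool) \<Rightarrow> 'v \<Rightarrow> bool" where
  "lf_conn_rooted_graph V E phi \<longleftrightarrow>
     phi \<in> V \<and>
     (\<forall>i j. E i j \<longrightarrow> i \<in> V \<and> j \<in> V) \<and>
     (\<forall>i j. E i j \<longrightarrow> E j i) \<and>
     (\<forall>i. \<not> E i i) \<and>
     (\<forall>i\<in>V. finite {j. E i j}) \<and>
     (\<forall>j\<in>V. (phi, j) \<in> {(x, y). E x y}\<^sup>*)"

definition deg :: "('v \<Rightarrow> 'v \<Rightarrow> bool) \<Rightarrow> 'v \<Rightarrow> nat" where
  "deg E i = card {j. E i j}"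

text \<open>Entries of P^s, where p_ij = a_ij / d_i.\<close>
fun trans_pow :: "('v \<Rightarrow> 'v \<Rightarrow> bool) \<Rightarrow> nat \<Rightarrow> 'v \<Rightarrow> 'v \<Rightarrow> real" where
  "trans_pow E 0 i j = (if i = j then 1 else 0)"
| "trans_pow E (Suc s) i j = (\<Sum>k\<in>{k. E i k}. trans_pow E s k j / real (deg E i))"

definition pagerank :: "real \<Rightarrow> 'v set \<Rightarrow> ('v \<Rightarrow> 'v \<Rightarrow> bool) \<Rightarrow> 'v \<Rightarrow> ennreal" where
  "pagerank c V E phi =
     (\<Sum>s. ennreal ((1 - c) * c ^ s) * (\<Sum>\<^sub>\<infinity> j\<in>V. ennreal (trans_pow E s j phi)))"

definition deg_ge :: "real \<Rightarrow> ('v \<Rightarrow> 'v \<Rightarrow> bool) \<Rightarrow> 'v \<Rightarrow> nat" where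
  "deg_ge \<alpha> E phi = card {j. E phi j \<and> real (deg E j) \<ge> \<alpha>}"

end

theory Submission
  imports Defs
begin

lemma pr_lower:
  fixes V :: "'v set" and E and phi :: 'v and c \<alpha> \<epsilon> k :: real
  assumes G: "lf_conn_rooted_graph V E phi"
    and c: "0 < c" "c < 1" and a: "0 < \<alpha>" and e: "0 < \<epsilon>" "\<epsilon> < 1" and k: "0 < k"
    and d: "real (deg E phi) > \<alpha> * k / (\<epsilon> * c * (1 - c))"
    and ge: "\<not> real (deg_ge \<alpha> E phi) \<ge> (1 - \<epsilon>) * real (deg E phi)"
  shows "pagerank c V E phi > ennreal k"
proof -
  define N where "N = {j. E phi j}"
  define L where "L = {j. E phi j \<and> \<not> real (deg E j) \<ge> \<alpha>}"
  define H where "H = {j. E phi j \<and> real (deg E j) \<ge> \<alpha>}"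
  have phiV: "phi \<in> V" and EV: "\<And>i j. E i j \<Longrightarrow> i \<in> V \<and> j \<in> V"
    and sym: "\<And>i j. E i j \<Longrightarrow> E j i" and fin: "\<And>i. i \<in> V \<Longrightarrow> finite {j. E i j}"
    using G unfolding lf_conn_rooted_graph_def by blast+
  have finN: "finite N" using fin phiV N_def by auto
  have LN: "L \<subseteq> N" "H \<subseteq> N" "L \<union> H = N" "L \<inter> H = {}"
    unfolding L_def H_def N_def by auto
  have finL: "finite L" using LN finN finite_subset by metis
  have finH: "finite H" using LN finN finite_subset by metis
  have cardN: "card N = card L + card H" using LN finL finH card_Un_disjoint by metis
  have "deg E phi = card N" unfolding deg_def N_def by simp
  moreover have "deg_ge \<alpha> E phi = card H" unfolding deg_ge_def H_def by simp
  ultimately have cardL: "real (card L) > \<epsilon> * real (deg E phi)"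
    using cardN ge by (simp add: algebra_simps)
  have LV: "L \<subseteq> V" using EV unfolding L_def by blast
  have degpos: "deg E j \<ge> 1" if "j \<in> L" for j
  proof -
    have "E j phi" using that sym unfolding L_def by blast
    moreover have "finite {i. E j i}" using fin LV that by blast
    ultimately have "card {i. E j i} \<noteq> 0" by auto
    thus ?thesis unfolding deg_def by simp
  qed
  have tp: "trans_pow E 1 j phi = 1 / real (deg E j)" if "j \<in> L" for j
  proof -
    have f: "finite {i. E j i}" using fin LV that by blast
    have "E j phi" using that sym unfolding L_def by blast
    have "trans_pow E 1 j phi = (\<Sum>i\<in>{i. E j i}. (if i = phi then 1 else 0) / real (deg E j))"
      by (simp add: One_nat_def)
    also have "\<dots> = (\<Sum>i\<in>{i. E j i}. (if i = phi then 1 / real (deg E j) else 0))"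
      by (rule sum.cong) auto
    also have "\<dots> = 1 / real (deg E j)" using f \<open>E j phi\<close> by (simp add: sum.delta)
    finally show ?thesis .
  qed
  have lowj: "1 / real (deg E j) \<ge> 1 / \<alpha>" if "j \<in> L" for j
  proof -
    have "real (deg E j) < \<alpha>" using that unfolding L_def by auto
    moreover have "real (deg E j) \<ge> 1" using degpos[OF that] by simp
    ultimately show ?thesis by (simp add: frac_le)
  qed
  define S where "S = (\<Sum>j\<in>L. 1 / real (deg E j))"
  have S: "S \<ge> real (card L) / \<alpha>"
  proof -
    have "(\<Sum>j\<in>L. 1 / \<alpha>) \<le> S" unfolding S_def by (rule sum_mono) (use lowj in auto)
    thus ?thesis by simp
  qed
  have Snn: "0 \<le> S" unfolding S_def by (intro sum_nonneg) auto
  have "(\<Sum>\<^sub>\<infinity> j\<in>L. ennreal (trans_pow E 1 j phi)) \<le> (\<Sum>\<^sub>\<infinity> j\<in>V. ennreal (trans_pow E 1 j phi))"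
    by (rule infsum_mono_neutral) (use LV in \<open>auto intro: nonneg_summable_on_complete\<close>)
  moreover have "(\<Sum>\<^sub>\<infinity> j\<in>L. ennreal (trans_pow E 1 j phi)) = ennreal S"
  proof -
    have "(\<Sum>\<^sub>\<infinity> j\<in>L. ennreal (trans_pow E 1 j phi)) = (\<Sum>j\<in>L. ennreal (trans_pow E 1 j phi))"
      using finL by (rule infsum_finite)
    also have "\<dots> = (\<Sum>j\<in>L. ennreal (1 / real (deg E j)))"
      by (rule sum.cong) (simp_all only: tp)
    also have "\<dots> = ennreal S" unfolding S_def by (rule sum_ennreal) auto
    finally show ?thesis .
  qed
  ultimately have inf1: "ennreal S \<le> (\<Sum>\<^sub>\<infinity> j\<in>V. ennreal (trans_pow E 1 j phi))" by simp
  define T where "T = (\<lambda>s. ennreal ((1 - c) * c ^ s) * (\<Sum>\<^sub>\<infinity> j\<in>V. ennreal (trans_pow E s j phi)))"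
  have "T 1 \<le> suminf T"
    using sum_le_suminf[of T "{1}"] by auto
  hence "ennreal ((1 - c) * c) * ennreal S \<le> pagerank c V E phi"
    unfolding pagerank_def T_def using inf1
    by (metis (no_types, lifting) mult_left_mono order_trans power_one_right zero_le)
  hence pr: "ennreal ((1 - c) * c * S) \<le> pagerank c V E phi"
    using c Snn by (simp add: ennreal_mult)
  have "k < (1 - c) * c * \<epsilon> * real (deg E phi) / \<alpha>"
    using d c e a by (simp add: field_simps)
  also have "\<dots> < (1 - c) * c * (real (card L) / \<alpha>)"
  proof -
    have pos: "0 < (1 - c) * c / \<alpha>" using c a by simp
    have "((1 - c) * c / \<alpha>) * (\<epsilon> * real (deg E phi)) < ((1 - c) * c / \<alpha>) * real (card L)"
      by (rule mult_strict_left_mono[OF cardL pos])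
    thus ?thesis by (simp add: field_simps)
  qed
  also have "\<dots> \<le> (1 - c) * c * S" using S c by (intro mult_left_mono) auto
  finally have "ennreal k < ennreal ((1 - c) * c * S)"
    using k by (simp add: ennreal_less_iff)
  thus ?thesis using pr by (rule less_le_trans)
qed

theorem mainTheorem4:
  fixes M :: "'a measure"
    and V :: "'a \<Rightarrow> 'v set"
    and E :: "'a \<Rightarrow> 'v \<Rightarrow> 'v \<Rightarrow> bool"
    and root :: "'a \<Rightarrow> 'v"
    and c \<alpha> \<epsilon> :: real
  assumes "prob_space M"
    and "0 < c" and "c < 1"
    and "\<forall>\<omega>\<in>space M. lf_conn_rooted_graph (V \<omega>) (E \<omega>) (root \<omega>)"
    and "(\<lambda>\<omega>. real (deg (E \<omega>) (root \<omega>))) \<in> borel_measurable M"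
    and "(\<lambda>\<omega>. real (deg_ge \<alpha> (E \<omega>) (root \<omega>))) \<in> borel_measurable M"
    and "(\<lambda>\<omega>. pagerank c (V \<omega>) (E \<omega>) (root \<omega>)) \<in> borel_measurable M"
    and "0 < \<alpha>" and "0 < \<epsilon>" and "\<epsilon> < 1"
    and "(\<lambda>k::real. measure M {\<omega> \<in> space M. real (deg (E \<omega>) (root \<omega>)) > k \<and>
              real (deg_ge \<alpha> (E \<omega>) (root \<omega>)) \<ge> (1 - \<epsilon>) * real (deg (E \<omega>) (root \<omega>))})
         \<in> o[at_top](\<lambda>k. measure M {\<omega> \<in> space M. real (deg (E \<omega>) (root \<omega>)) > k})"
  shows "\<exists>h :: real \<Rightarrow> real. (h \<longlongrightarrow> 0) at_top \<and>
           (\<forall>\<^sub>F k in at_top.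
              measure M {\<omega> \<in> space M. pagerank c (V \<omega>) (E \<omega>) (root \<omega>) > ennreal k}
              \<ge> (1 + h k) * measure M {\<omega> \<in> space M.
                     real (deg (E \<omega>) (root \<omega>)) > \<alpha> * k / (\<epsilon> * c * (1 - c))})"
proof -
  interpret P: prob_space M by fact
  define D where "D = (\<lambda>\<omega>. real (deg (E \<omega>) (root \<omega>)))"
  define Dg where "Dg = (\<lambda>\<omega>. real (deg_ge \<alpha> (E \<omega>) (root \<omega>)))"
  define f where "f = (\<lambda>x. measure M {\<omega> \<in> space M. D \<omega> > x \<and> Dg \<omega> \<ge> (1 - \<epsilon>) * D \<omega>})"
  define g where "g = (\<lambda>x. measure M {\<omega> \<in> space M. D \<omega> > x})"
  define K where "K = (\<lambda>k::real. \<alpha> * k / (\<epsilon> * c * (1 - c)))"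
  define h where "h = (\<lambda>k. - (f (K k) / g (K k)))"
  have Dm: "D \<in> borel_measurable M" and Dgm: "Dg \<in> borel_measurable M"
    using assms(5,6) unfolding D_def Dg_def by auto
  have fo: "f \<in> o[at_top](g)" using assms(11) unfolding f_def g_def D_def Dg_def .
  have Klim: "filterlim K at_top at_top"
  proof -
    have K': "K = (\<lambda>k. (\<alpha> / (\<epsilon> * c * (1 - c))) * k)" unfolding K_def by auto
    have "0 < \<alpha> / (\<epsilon> * c * (1 - c))" using assms(2,3,8,9) by simp
    thus ?thesis unfolding K'
      by (intro filterlim_tendsto_pos_mult_at_top[OF tendsto_const] filterlim_ident)
  qed
  have "((\<lambda>x. f x / g x) \<longlongrightarrow> 0) at_top" by (rule smalloD_tendsto[OF fo])
  hence "((\<lambda>k. f (K k) / g (K k)) \<longlongrightarrow> 0) at_top" using Klim by (rule filterlim_compose)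
  hence hlim: "(h \<longlongrightarrow> 0) at_top" unfolding h_def using tendsto_minus by fastforce
  have "\<forall>\<^sub>F k in at_top. (0::real) < k" by (rule eventually_gt_at_top)
  hence "\<forall>\<^sub>F k in at_top.
              measure M {\<omega> \<in> space M. pagerank c (V \<omega>) (E \<omega>) (root \<omega>) > ennreal k}
              \<ge> (1 + h k) * measure M {\<omega> \<in> space M.
                     real (deg (E \<omega>) (root \<omega>)) > \<alpha> * k / (\<epsilon> * c * (1 - c))}"
  proof eventually_elim
    case (elim k)
    define A where "A = {\<omega> \<in> space M. pagerank c (V \<omega>) (E \<omega>) (root \<omega>) > ennreal k}"
    define B where "B = {\<omega> \<in> space M. D \<omega> > K k}"
    define C where "C = {\<omega> \<in> space M. D \<omega> > K k \<and> Dg \<omega> \<ge> (1 - \<epsilon>) * D \<omega>}"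
    have Am: "A \<in> sets M" unfolding A_def using assms(7) by measurable
    have Bm: "B \<in> sets M" unfolding B_def using Dm by measurable
    have Cm: "C \<in> sets M" unfolding C_def using Dm Dgm by measurable
    have sub: "B \<subseteq> A \<union> C"
    proof
      fix \<omega> assume w: "\<omega> \<in> B"
      show "\<omega> \<in> A \<union> C"
      proof (cases "Dg \<omega> \<ge> (1 - \<epsilon>) * D \<omega>")
        case True thus ?thesis using w unfolding B_def C_def by auto
      next
        case False
        have "\<omega> \<in> space M" using w B_def by auto
        hence "pagerank c (V \<omega>) (E \<omega>) (root \<omega>) > ennreal k"
          using pr_lower[of "V \<omega>" "E \<omega>" "root \<omega>" c \<alpha> \<epsilon> k] assms(2,3,4,8,9,10) elim False w
          unfolding B_def K_def D_def Dg_def by auto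
        thus ?thesis using \<open>\<omega> \<in> space M\<close> unfolding A_def by auto
      qed
    qed
    have "measure M B \<le> measure M (A \<union> C)"
      using sub Am Cm by (intro P.finite_measure_mono) auto
    also have "\<dots> \<le> measure M A + measure M C"
      using Am Cm by (rule measure_Un_le)
    finally have ineq: "measure M B - measure M C \<le> measure M A" by simp
    have CB: "C \<subseteq> B" unfolding B_def C_def by auto
    have "measure M C \<le> measure M B" using CB Bm by (intro P.finite_measure_mono) auto
    have eq: "(1 + h k) * g (K k) = measure M B - measure M C"
    proof (cases "g (K k) = 0")
      case True
      hence "measure M B = 0" unfolding g_def B_def by simp
      moreover have "measure M C \<ge> 0" by simp
      ultimately have "measure M C = 0" using \<open>measure M C \<le> measure M B\<close> by linarith
      thus ?thesis using True \<open>measure M B = 0\<close> by simp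
    next
      case False
      thus ?thesis unfolding h_def f_def g_def B_def C_def by (simp add: field_simps)
    qed
    show ?case using eq ineq unfolding g_def K_def A_def B_def D_def by simp
  qed
  thus ?thesis using hlim by blast
qed

end
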